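(* Let $\mathcal{X}$ be an instance space, $C\ge 2$ an integer, $\mathcal{Y}=\{e_1,\dots,e_C\}\subset\mathbb{R}^C$ the label space (one-hot encodings of $C$ classes), $\mathcal{H}$ a hypothesis space of functions $h:\mathcal{X}\to\mathcal{Y}$, and $\mathcal{D}_{\mathcal{X}}$ a probability distribution on $\mathcal{X}$. For $h_1,h_2\in\mathcal{H}$ let $\rho(h_1,h_2)=\mathbb{P}_{X\sim\mathcal{D}_{\mathcal{X}}}[h_1(X)\neq h_2(X)]$. Fix $g\in\mathcal{H}$ and $x_0\in\mathcal{X}$, let $\mathcal{H}^{g,x_0}=\{h\in\mathcal{H}: h(x_0)\neq g(x_0)\}$, and define the least disagree metric $L(g,x_0)=\inf_{h\in\mathcal{H}^{g,x_0}}\rho(h,g)$. Assume: (A1) $\mathcal{H}$ is a Polish space with metric $d_{\mathcal{H}}$; (A2) there is $B>0$ with $\rho(h,g')\le B\, d_{\mathcal{H}}(h,g')$ for all $h,g'\in\mathcal{H}$; (A3) (coverage) a randomized procedure outputs finite sets $\mathcal{H}_1\subseteq\mathcal{H}_2\subseteq\cdots\subset\mathcal{H}$ with $|\mathcal{H}_N|=N$, and there exist deterministic functions $\alpha:\mathbb{N}\times\mathbb{R}_{\ge0}\to\mathbb{R}_{\ge0}$ and $\beta:\mathbb{N}\to\mathbb{R}_{>0}$ with $\lim_{N\to\infty}\alpha(N,\varepsilon)=\lim_{N\to\infty}\beta(N)=0$ for every $\varepsilon\in(0,1)$, such that for all $\varepsilon\in(0,1)$, $$\mathbb{P}\Big[\inf_{\substack{h^*\in\mathcal{H}^{g,x_0}\\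 \rho(h^*,g)-L(g,x_0)\le\varepsilon}}\ \min_{h\in\mathcal{H}_N^{g,x_0}} d_{\mathcal{H}}(h^*,h)\le \tfrac{1}{B}\alpha(N,\varepsilon)\Big]\ge 1-\beta(N),$$ where $\mathcal{H}_N^{g,x_0}=\mathcal{H}_N\cap\mathcal{H}^{g,x_0}$. Let $X_1,\dots,X_M$ be i.i.d. from $\mathcal{D}_{\mathcal{X}}$ (independent of the procedure generating $\mathcal{H}_N$), let $\rho_M(h,g)=\frac1M\sum_{i=1}^M\mathbb{I}[h(X_i)\neq g(X_i)]$, and define the estimator $L_{N,M}(g,x_0)=\inf_{h\in\mathcal{H}_N^{g,x_0}}\rho_M(h,g)$. Then for any $\delta>0$, if $M>\frac{8}{\delta^2}\log(CN)$, for every $\varepsilon\in(0,1)$, $$\mathbb{P}\big[|L_{N,M}(g,x_0)-L(g,x_0)|\le 2\delta+\alpha(N,\varepsilon)+\varepsilon\big]\ge 1-\frac{1}{CN}-\beta(N).$$ Furthermore, as $\min(M,N)\to\infty$ with $M=\omega(\log(CN))$ (i.e. $M/\log(CN)\to\infty$), $L_{N,M}(g,x_0)\to L(g,x_0)$ in probability.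
   Context: $\mathbb{I}[\cdot]$ denotes the indicator function. The probability in the conclusion is over both the randomness of $\mathcal{H}_N$ and of $X_1,\dots,X_M$. *)

theory Defs
  imports "HOL-Probability.Probability"
begin

text \<open>Label space: the one-hot encodings e_1,...,e_C of the C = CARD('c) classes in R^C.\<close>
definition onehot_labels :: "(real ^ 'c) set" where
  "onehot_labels = range (\<lambda>i. axis i 1)"

definition rho :: "'x measure \<Rightarrow> ('x \<Rightarrow> 'y) \<Rightarrow> ('x \<Rightarrow> 'y) \<Rightarrow> real" where
  "rho D h1 h2 = measure D {x \<in> space D. h1 x \<noteq> h2 x}"

definition disagree_set :: "('x \<Rightarrow> 'y) set \<Rightarrow> ('x \<Rightarrow> 'y) \<Rightarrow> 'x \<Rightarrow> ('x \<Rightarrow> 'y) set" where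
  "disagree_set H g x0 = {h \<in> H. h x0 \<noteq> g x0}"

definition LDM :: "'x measure \<Rightarrow> ('x \<Rightarrow> 'y) set \<Rightarrow> ('x \<Rightarrow> 'y) \<Rightarrow> 'x \<Rightarrow> real" where
  "LDM D H g x0 = (INF h \<in> disagree_set H g x0. rho D h g)"

definition rho_emp :: "nat \<Rightarrow> (nat \<Rightarrow> 'x) \<Rightarrow> ('x \<Rightarrow> 'y) \<Rightarrow> ('x \<Rightarrow> 'y) \<Rightarrow> real" where
  "rho_emp M X h g = (\<Sum>i<M. of_bool (h (X i) \<noteq> g (X i))) / real M"

text \<open>Estimator L_{N,M}(g,x0) = inf over the finite set H_N^{g,x0} of rho_M(h,g).
  (Only meaningful when H_N^{g,x0} is nonempty; otherwise the paper's value is +infinity,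
  which is handled by requiring nonemptiness explicitly in the events below.)\<close>
definition LNM :: "nat \<Rightarrow> (nat \<Rightarrow> 'x) \<Rightarrow> ('x \<Rightarrow> 'y) set \<Rightarrow> ('x \<Rightarrow> 'y) \<Rightarrow> 'x \<Rightarrow> real" where
  "LNM M X HN g x0 = (INF h \<in> disagree_set HN g x0. rho_emp M X h g)"

text \<open>Infimum / minimum over an empty set are +infinity in the paper, so nonemptiness is required.\<close>
definition coverage_event ::
  "'x measure \<Rightarrow> ('x \<Rightarrow> 'y) set \<Rightarrow> (('x \<Rightarrow> 'y) \<Rightarrow> ('x \<Rightarrow> 'y) \<Rightarrow> real) \<Rightarrow> ('x \<Rightarrow> 'y) \<Rightarrow> 'x
    \<Rightarrow> real \<Rightarrow> ('x \<Rightarrow> 'y) set \<Rightarrow> real \<Rightarrow> bool" where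
  "coverage_event D H d g x0 eps HN a \<longleftrightarrow>
     (let S = {hs \<in> disagree_set H g x0. rho D hs g - LDM D H g x0 \<le> eps};
          T = disagree_set HN g x0
      in S \<noteq> {} \<and> T \<noteq> {} \<and> (INF hs \<in> S. Min ((\<lambda>h. d hs h) ` T)) \<le> a)"

definition estimate_ok ::
  "'x measure \<Rightarrow> ('x \<Rightarrow> 'y) set \<Rightarrow> ('x \<Rightarrow> 'y) \<Rightarrow> 'x \<Rightarrow> nat \<Rightarrow> ('x \<Rightarrow> 'y) set \<Rightarrow> (nat \<Rightarrow> 'x) \<Rightarrow> real \<Rightarrow> bool" where
  "estimate_ok D H g x0 M HN X t \<longleftrightarrow>
     disagree_set HN g x0 \<noteq> {} \<and> \<bar>LNM M X HN g x0 - LDM D H g x0\<bar> \<le> t"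

end

theory Submission
  imports Defs
begin


lemma pred_neq_finite:
  assumes F: "F \<in> M \<rightarrow>\<^sub>M count_space UNIV" and G: "G \<in> M \<rightarrow>\<^sub>M count_space UNIV"
    and L: "finite L" and FL: "\<forall>x\<in>space M. F x \<in> L"
  shows "Measurable.pred M (\<lambda>x. F x \<noteq> G x)"
proof -
  have eq: "{x\<in>space M. F x \<noteq> G x} = (\<Union>v\<in>L. {x\<in>space M. F x = v} \<inter> {x\<in>space M. G x \<noteq> v})"
    using FL by auto
  have "\<And>v. {x\<in>space M. F x = v} \<in> sets M" using F by (simp add: pred_def[symmetric])
  moreover have "\<And>v. {x\<in>space M. G x \<noteq> v} \<in> sets M" using G by (simp add: pred_def[symmetric])
  ultimately show ?thesis unfolding pred_def eq using L by (intro sets.finite_UN) auto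
qed

lemma finite_onehot: "finite (onehot_labels :: (real ^ 'c::finite) set)"
  unfolding onehot_labels_def by simp

context
  fixes D :: "'x measure" and H :: "('x \<Rightarrow> real ^ 'c) set"
    and d :: "('x \<Rightarrow> real ^ 'c) \<Rightarrow> ('x \<Rightarrow> real ^ 'c) \<Rightarrow> real"
    and g :: "'x \<Rightarrow> real ^ 'c" and B :: real
  assumes D: "prob_space D"
    and H_labels: "\<forall>h\<in>H. \<forall>x\<in>space D. h x \<in> onehot_labels"
    and H_meas: "\<forall>h\<in>H. h \<in> D \<rightarrow>\<^sub>M count_space UNIV"
    and A1: "Metric_space H d"
    and A2: "B > 0 \<and> (\<forall>h\<in>H. \<forall>g'\<in>H. rho D h g' \<le> B * d h g')"
begin

lemma neq_sets: "h1 \<in> H \<Longrightarrow> h2 \<in> H \<Longrightarrow> {x\<in>space D. h1 x \<noteq> h2 x} \<in> sets D"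
  unfolding pred_def[symmetric]
  by (rule pred_neq_finite[OF _ _ finite_onehot]) (use H_meas H_labels in auto)

lemma rho_tri: "h1 \<in> H \<Longrightarrow> h2 \<in> H \<Longrightarrow> h3 \<in> H \<Longrightarrow> rho D h1 h3 \<le> rho D h1 h2 + rho D h2 h3"
proof -
  assume h: "h1 \<in> H" "h2 \<in> H" "h3 \<in> H"
  interpret prob_space D by (rule D)
  have "rho D h1 h3 \<le> measure D ({x\<in>space D. h1 x \<noteq> h2 x} \<union> {x\<in>space D. h2 x \<noteq> h3 x})"
    unfolding rho_def using h neq_sets by (intro finite_measure_mono) auto
  also have "\<dots> \<le> rho D h1 h2 + rho D h2 h3"
    unfolding rho_def using h neq_sets by (intro measure_Un_le) auto
  finally show ?thesis .
qed

lemma cov_key: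
  fixes xz :: 'x and e :: real and T :: "('x \<Rightarrow> real ^ 'c) set" and a :: real
  defines "S \<equiv> {hs \<in> disagree_set H g xz. rho D hs g - LDM D H g xz \<le> e}"
  assumes T: "finite T" "T \<subseteq> H" "T \<noteq> {}" and S: "S \<noteq> {}" and g: "g \<in> H"
    and inf: "(INF hs \<in> S. Min ((\<lambda>h. d hs h) ` T)) \<le> a"
  shows "\<exists>h\<in>T. rho D h g \<le> LDM D H g xz + e + B * a"
proof -
  interpret Metric_space H d by (rule A1)
  define m where "m = Min ((\<lambda>h. rho D h g) ` T)"
  have "m \<le> LDM D H g xz + e + B * a"
  proof (rule field_le_epsilon)
    fix \<epsilon> :: real assume \<epsilon>: "\<epsilon> > 0"
    have Bp: "B > 0" using A2 by auto
    have "(INF hs \<in> S. Min ((\<lambda>h. d hs h) ` T)) < a + \<epsilon> / B" using inf divide_pos_pos[OF \<epsilon> Bp] by linarith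
    moreover have "bdd_below ((\<lambda>hs. Min ((\<lambda>h. d hs h) ` T)) ` S)"
      proof (rule bdd_belowI[of _ 0])
      fix y assume "y \<in> (\<lambda>hs. Min ((\<lambda>h. d hs h) ` T)) ` S"
      then obtain hs where "y = Min ((\<lambda>h. d hs h) ` T)" by auto
      moreover have "0 \<le> Min ((\<lambda>h. d hs h) ` T)" using T by (subst Min_ge_iff) auto
      ultimately show "0 \<le> y" by simp
    qed
    ultimately obtain hs where hs: "hs \<in> S" "Min ((\<lambda>h. d hs h) ` T) < a + \<epsilon> / B"
      using cINF_less_iff[OF S] by blast
    obtain h where h: "h \<in> T" "d hs h = Min ((\<lambda>h. d hs h) ` T)"
    proof -
      have "Min ((\<lambda>h. d hs h) ` T) \<in> (\<lambda>h. d hs h) ` T" using T by (intro Min_in) auto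
      then show ?thesis using that by auto
    qed
    have hsH: "hs \<in> H" using hs(1) unfolding S_def disagree_set_def by auto
    have hH: "h \<in> H" using h T by auto
    have "m \<le> rho D h g" unfolding m_def using h T by auto
    also have "\<dots> \<le> rho D h hs + rho D hs g" by (rule rho_tri[OF hH hsH g])
    also have "rho D h hs \<le> B * d hs h" using A2 hH hsH commute by metis
    also have "B * d hs h \<le> B * (a + \<epsilon> / B)" using hs h Bp by simp
    also have "rho D hs g \<le> LDM D H g xz + e" using hs(1) unfolding S_def by auto
    finally have "m \<le> B * (a + \<epsilon> / B) + (LDM D H g xz + e)" by simp
    moreover have "B * (a + \<epsilon> / B) = B * a + \<epsilon>" using Bp by (simp add: field_simps)
    ultimately show "m \<le> LDM D H g xz + e + B * a + \<epsilon>" by linarith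
  qed
  moreover have "m \<in> (\<lambda>h. rho D h g) ` T" unfolding m_def using T by (intro Min_in) auto
  ultimately show ?thesis by auto
qed

end



lemma est_char:
  fixes hs :: "nat \<Rightarrow> 'x \<Rightarrow> 'y"
  shows "estimate_ok D H g x0 M (hs ` {..<N}) X t \<longleftrightarrow>
    (\<exists>i<N. hs i x0 \<noteq> g x0 \<and> rho_emp M X (hs i) g \<le> LDM D H g x0 + t) \<and>
    (\<forall>i<N. hs i x0 \<noteq> g x0 \<longrightarrow> LDM D H g x0 - t \<le> rho_emp M X (hs i) g)"
proof -
  define A where "A = {i. i < N \<and> hs i x0 \<noteq> g x0}"
  define L where "L = LDM D H g x0"
  have fA: "finite A" unfolding A_def by auto
  have T: "disagree_set (hs ` {..<N}) g x0 = hs ` A"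
    unfolding disagree_set_def A_def by auto
  have LNM: "LNM M X (hs ` {..<N}) g x0 = (INF i\<in>A. rho_emp M X (hs i) g)"
    unfolding LNM_def T by (simp add: image_image)
  show ?thesis
  proof (cases "A = {}")
    case True
    then show ?thesis unfolding estimate_ok_def T by (auto simp: A_def)
  next
    case False
    have eq: "(INF i\<in>A. rho_emp M X (hs i) g) = Min ((\<lambda>i. rho_emp M X (hs i) g) ` A)"
      using False fA by (simp add: cInf_eq_Min)
    have "\<bar>Min ((\<lambda>i. rho_emp M X (hs i) g) ` A) - L\<bar> \<le> t \<longleftrightarrow>
      Min ((\<lambda>i. rho_emp M X (hs i) g) ` A) \<le> L + t \<and> L - t \<le> Min ((\<lambda>i. rho_emp M X (hs i) g) ` A)"
      by auto
    also have "\<dots> \<longleftrightarrow> (\<exists>i\<in>A. rho_emp M X (hs i) g \<le> L + t) \<and> (\<forall>i\<in>A. L - t \<le> rho_emp M X (hs i) g)"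
      using False fA by (simp add: Min_le_iff Min_ge_iff)
    finally show ?thesis unfolding estimate_ok_def T LNM eq L_def[symmetric] using False
      by (auto simp: A_def)
  qed
qed



context
  fixes D :: "'x measure" and H :: "('x \<Rightarrow> real ^ 'c) set"
    and g :: "'x \<Rightarrow> real ^ 'c" and x0 :: 'x
    and Q :: "'w measure" and hs :: "nat \<Rightarrow> 'w \<Rightarrow> ('x \<Rightarrow> real ^ 'c)"
  assumes D: "prob_space D"
    and Q: "prob_space Q"
    and H_labels: "\<forall>h\<in>H. \<forall>x\<in>space D. h x \<in> onehot_labels"
    and H_meas: "\<forall>h\<in>H. h \<in> D \<rightarrow>\<^sub>M count_space UNIV"
    and g: "g \<in> H" and x0: "x0 \<in> space D"
    and hs_in: "\<forall>i. \<forall>\<omega>\<in>space Q. hs i \<omega> \<in> H"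
    and hs_meas: "\<forall>i. (\<lambda>(\<omega>, x). hs i \<omega> x) \<in> Q \<Otimes>\<^sub>M D \<rightarrow>\<^sub>M count_space UNIV"
begin

lemma act_meas: "Measurable.pred Q (\<lambda>\<omega>. hs i \<omega> x0 \<noteq> g x0)"
proof -
  have "(\<lambda>\<omega>. hs i \<omega> x0) \<in> Q \<rightarrow>\<^sub>M count_space UNIV"
    using measurable_compose[OF measurable_Pair2'[OF x0] hs_meas[rule_format, of i]] by simp
  then show ?thesis by measurable
qed

lemma pair_pred: "Measurable.pred (Q \<Otimes>\<^sub>M D) (\<lambda>p. hs i (fst p) (snd p) \<noteq> g (snd p))"
proof (rule pred_neq_finite[OF _ _ finite_onehot])
  show "(\<lambda>p. hs i (fst p) (snd p)) \<in> Q \<Otimes>\<^sub>M D \<rightarrow>\<^sub>M count_space UNIV"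
    using hs_meas[rule_format, of i] by (simp add: case_prod_beta')
  show "(\<lambda>p. g (snd p)) \<in> Q \<Otimes>\<^sub>M D \<rightarrow>\<^sub>M count_space UNIV"
    using measurable_compose[OF measurable_snd[of Q D] H_meas[rule_format, OF g]] by (simp add: comp_def)
  show "\<forall>x\<in>space (Q \<Otimes>\<^sub>M D). hs i (fst x) (snd x) \<in> onehot_labels"
    using hs_in H_labels by (auto simp: space_pair_measure)
qed

lemma r_meas: "(\<lambda>z. rho_emp M (snd z) (hs i (fst z)) g) \<in> borel_measurable (Q \<Otimes>\<^sub>M PiM {..<M} (\<lambda>_. D))"
proof -
  have p: "Measurable.pred (Q \<Otimes>\<^sub>M PiM {..<M} (\<lambda>_. D)) (\<lambda>z. hs i (fst z) (snd z j) \<noteq> g (snd z j))"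
    if j: "j \<in> {..<M}" for j
  proof -
    have "(\<lambda>z. (fst z, snd z j)) \<in> (Q \<Otimes>\<^sub>M PiM {..<M} (\<lambda>_. D)) \<rightarrow>\<^sub>M (Q \<Otimes>\<^sub>M D)"
      using j by measurable
    from measurable_compose[OF this pair_pred[of i]] show ?thesis by simp
  qed
  show ?thesis unfolding rho_emp_def
    by (intro borel_measurable_divide borel_measurable_sum) (use p in measurable)
qed

lemma good_sets:
  "{z \<in> space (Q \<Otimes>\<^sub>M PiM {..<M} (\<lambda>_. D)).
     estimate_ok D H g x0 M ((\<lambda>i. hs i (fst z)) ` {..<N}) (snd z) t}
   \<in> sets (Q \<Otimes>\<^sub>M PiM {..<M} (\<lambda>_. D))"
proof -
  note [measurable] = r_meas measurable_compose[OF measurable_fst act_meas]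
  show ?thesis unfolding est_char by measurable
qed

end


lemma indep_coords:
  assumes D: "prob_space D" and I: "I \<noteq> {}"
  shows "prob_space.indep_vars (PiM I (\<lambda>_. D)) (\<lambda>_. D) (\<lambda>j X. X j) I"
proof -
  interpret P: prob_space "PiM I (\<lambda>_. D)" using D by (intro prob_space_PiM) auto
  have "P.indep_vars (\<lambda>_. D) (\<lambda>j X. X j) I \<longleftrightarrow>
    distr (PiM I (\<lambda>_. D)) (PiM I (\<lambda>_. D)) (\<lambda>x. \<lambda>i\<in>I. x i) = (PiM I (\<lambda>i. distr (PiM I (\<lambda>_. D)) D (\<lambda>X. X i)))"
    by (rule P.indep_vars_iff_distr_eq_PiM'[OF I]) simp
  also have "distr (PiM I (\<lambda>_. D)) (PiM I (\<lambda>_. D)) (\<lambda>x. \<lambda>i\<in>I. x i) = distr (PiM I (\<lambda>_. D)) (PiM I (\<lambda>_. D)) (\<lambda>x. x)"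
    by (intro distr_cong) (auto simp: space_PiM)
  also have "\<dots> = PiM I (\<lambda>_. D)" by simp
  also have "PiM I (\<lambda>i. distr (PiM I (\<lambda>_. D)) D (\<lambda>X. X i)) = PiM I (\<lambda>_. D)"
    by (intro PiM_cong refl distr_PiM_component D) 
  finally show ?thesis by simp
qed

lemma hoeff:
  fixes f :: "'x \<Rightarrow> real"
  assumes D: "prob_space D" and M: "M \<ge> 1" and f: "f \<in> borel_measurable D"
    and f01: "\<forall>x\<in>space D. f x \<in> {0..1}" and \<delta>: "\<delta> \<ge> 0"
  shows "measure (PiM {..<M} (\<lambda>_. D)) {X \<in> space (PiM {..<M} (\<lambda>_. D)).
      \<bar>(\<Sum>j<M. f (X j)) / real M - integral\<^sup>L D f\<bar> \<ge> \<delta>} \<le> 2 * exp (- 2 * real M * \<delta>\<^sup>2)"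
proof -
  let ?P = "PiM {..<M} (\<lambda>_. D)"
  interpret P: prob_space ?P using D by (intro prob_space_PiM) auto
  have I: "{..<M} \<noteq> {}" using M by (auto simp: lessThan_empty_iff)
  have ind: "P.indep_vars (\<lambda>_. borel) (\<lambda>j X. f (X j)) {..<M}"
    using P.indep_vars_compose2[OF indep_coords[OF D I], of "\<lambda>_. f" "\<lambda>_. borel"] f by simp
  have E: "P.expectation (\<lambda>X. f (X j)) = integral\<^sup>L D f" if j: "j < M" for j
  proof -
    have "integral\<^sup>L D f = integral\<^sup>L (distr ?P D (\<lambda>X. X j)) f"
      using distr_PiM_component[of "{..<M}" "\<lambda>_. D" j] D j by simp
    also have "\<dots> = P.expectation (\<lambda>X. f (X j))"
      using j f by (subst integral_distr) (auto simp: comp_def)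
    finally show ?thesis by simp
  qed
  interpret Hoeffding_ineq ?P "{..<M}" "\<lambda>j X. f (X j)" "\<lambda>_. 0" "\<lambda>_. 1"
    "\<Sum>j<M. P.expectation (\<lambda>X. f (X j))"
  proof unfold_locales
    show "AE x in ?P. f (x i) \<in> {0..1}" if "i \<in> {..<M}" for i
      using that f01 by (intro AE_I2) (auto simp: space_PiM PiE_iff)
  qed (use ind in auto)
  have mu: "(\<Sum>j<M. P.expectation (\<lambda>X. f (X j))) = real M * integral\<^sup>L D f"
    using E by (simp add: lessThan_iff)
  have pos: "(\<Sum>i<M. (1 - (0::real))\<^sup>2) > 0" using M by simp
  have "{X \<in> space ?P. \<bar>(\<Sum>j<M. f (X j)) / real M - integral\<^sup>L D f\<bar> \<ge> \<delta>} =
        {X \<in> space ?P. \<bar>(\<Sum>j<M. f (X j)) - (\<Sum>j<M. P.expectation (\<lambda>X. f (X j)))\<bar> \<ge> real M * \<delta>}"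
  proof -
    have "\<bar>s / real M - c\<bar> = \<bar>s - real M * c\<bar> / real M" for s c
      using M by (simp add: field_simps abs_divide[symmetric])
    then show ?thesis unfolding mu using M by (auto simp: field_simps)
  qed
  also have "P.prob \<dots> \<le> 2 * exp (- 2 * (real M * \<delta>)\<^sup>2 / (\<Sum>i<M. (1 - (0::real))\<^sup>2))"
    using Hoeffding_ineq_abs_ge[OF _ pos] \<delta> by simp
  also have "- 2 * (real M * \<delta>)\<^sup>2 / (\<Sum>i<M. (1 - (0::real))\<^sup>2) = - 2 * real M * \<delta>\<^sup>2"
    using M by (simp add: power2_eq_square)
  finally show ?thesis .
qed


lemma numeric:
  fixes x n K :: real
  assumes x: "x \<ge> 2" and n: "n \<ge> 1" "n \<le> x" and K: "8 * ln x < K"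
  shows "2 * n * exp (- 2 * K) \<le> 1 / x"
proof -
  have xp: "x > 0" using x by simp
  have "exp (- 2 * K) \<le> exp (- 16 * ln x)" using K by simp
  also have "exp (- 16 * ln x) = 1 / x ^ 16"
  proof -
    have "exp (16 * ln x) = x powr (real 16)" using xp by (simp add: powr_def)
    also have "\<dots> = x ^ 16" using xp by (rule powr_realpow)
    finally show ?thesis by (simp add: exp_minus field_simps)
  qed
  finally have e: "exp (- 2 * K) \<le> 1 / x ^ 16" .
  have "2 * n * exp (- 2 * K) \<le> 2 * x * (1 / x ^ 16)"
    using e n by (intro mult_mono) auto
  also have "\<dots> \<le> 1 / x"
  proof -
    have "(2::real) ^ 14 \<le> x ^ 14" using x by (intro power_mono) auto
    then have h: "2 * (x * x) \<le> x ^ 14 * (x * x)" using xp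
      by (intro mult_right_mono) auto
    have "x ^ 14 * x ^ 2 = x ^ 16" by (subst power_add[symmetric]) simp
    then have "x ^ 16 = x ^ 14 * (x * x)" by (simp add: power2_eq_square)
    then have "2 * x * x \<le> x ^ 16" using h by simp
    then show ?thesis using xp by (simp add: field_simps)
  qed
  finally show ?thesis .
qed

theorem theorem1:
  fixes D :: "'x measure"                         \<comment> \<open>distribution D_X on the instance space space D\<close>
    and H :: "('x \<Rightarrow> real ^ 'c) set"             \<comment> \<open>hypothesis space, C = CARD('c)\<close>
    and d :: "('x \<Rightarrow> real ^ 'c) \<Rightarrow> ('x \<Rightarrow> real ^ 'c) \<Rightarrow> real"  \<comment> \<open>metric d_H\<close>
    and g :: "'x \<Rightarrow> real ^ 'c" and x0 :: 'x and B :: real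
    and Q :: "'w measure"                         \<comment> \<open>randomness of the procedure\<close>
    and hs :: "nat \<Rightarrow> 'w \<Rightarrow> ('x \<Rightarrow> real ^ 'c)"   \<comment> \<open>H_N = {hs 0, ..., hs (N-1)}\<close>
    and \<alpha> :: "nat \<Rightarrow> real \<Rightarrow> real" and \<beta> :: "nat \<Rightarrow> real"
  assumes C2: "CARD('c) \<ge> 2"
    and D: "prob_space D"
    and Q: "prob_space Q"
    and H_labels: "\<forall>h\<in>H. \<forall>x\<in>space D. h x \<in> onehot_labels"
    and H_meas: "\<forall>h\<in>H. h \<in> D \<rightarrow>\<^sub>M count_space UNIV"
    and g: "g \<in> H" and x0: "x0 \<in> space D"
    and A1: "Metric_space H d \<and> Metric_space.mcomplete H d \<and> separable_space (Metric_space.mtopology H d)"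
    and A2: "B > 0 \<and> (\<forall>h\<in>H. \<forall>g'\<in>H. rho D h g' \<le> B * d h g')"
    and hs_in: "\<forall>i. \<forall>\<omega>\<in>space Q. hs i \<omega> \<in> H"
    and hs_inj: "\<forall>\<omega>\<in>space Q. inj (\<lambda>i. hs i \<omega>)"
    and hs_meas: "\<forall>i. (\<lambda>(\<omega>, x). hs i \<omega> x) \<in> Q \<Otimes>\<^sub>M D \<rightarrow>\<^sub>M count_space UNIV"
    and \<alpha>_nonneg: "\<forall>N e. e \<ge> 0 \<longrightarrow> \<alpha> N e \<ge> 0"
    and \<beta>_pos: "\<forall>N. \<beta> N > 0"
    and \<alpha>_lim: "\<forall>e. 0 < e \<and> e < 1 \<longrightarrow> (\<lambda>N. \<alpha> N e) \<longlonglongrightarrow> 0"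
    and \<beta>_lim: "\<beta> \<longlonglongrightarrow> 0"
    and A3: "\<forall>e. 0 < e \<and> e < 1 \<longrightarrow> (\<forall>N\<ge>1.
              prob_space.prob Q {\<omega> \<in> space Q.
                 coverage_event D H d g x0 e ((\<lambda>i. hs i \<omega>) ` {..<N}) (\<alpha> N e / B)} \<ge> 1 - \<beta> N)"
  shows
    "(\<forall>\<delta>>0. \<forall>N\<ge>1. \<forall>M::nat. real M > 8 / \<delta>^2 * ln (real CARD('c) * real N) \<longrightarrow>
        (\<forall>e. 0 < e \<and> e < 1 \<longrightarrow>
           prob_space.prob (Q \<Otimes>\<^sub>M PiM {..<M} (\<lambda>_. D))
             {z \<in> space (Q \<Otimes>\<^sub>M PiM {..<M} (\<lambda>_. D)).
                estimate_ok D H g x0 M ((\<lambda>i. hs i (fst z)) ` {..<N}) (snd z)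
                  (2 * \<delta> + \<alpha> N e + e)}
           \<ge> 1 - 1 / (real CARD('c) * real N) - \<beta> N))
     \<and>
     (\<forall>Ns Ms :: nat \<Rightarrow> nat.
        filterlim Ns at_top sequentially \<longrightarrow> filterlim Ms at_top sequentially \<longrightarrow>
        filterlim (\<lambda>k. real (Ms k) / ln (real CARD('c) * real (Ns k))) at_top sequentially \<longrightarrow>
        (\<forall>\<eta>>0. (\<lambda>k. prob_space.prob (Q \<Otimes>\<^sub>M PiM {..<Ms k} (\<lambda>_. D))
             {z \<in> space (Q \<Otimes>\<^sub>M PiM {..<Ms k} (\<lambda>_. D)).
                \<not> estimate_ok D H g x0 (Ms k) ((\<lambda>i. hs i (fst z)) ` {..<Ns k}) (snd z) \<eta>})
           \<longlonglongrightarrow> 0))"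
  proof -
  interpret Dp: prob_space D by (rule D)
  interpret Qp: prob_space Q by (rule Q)
  have Met: "Metric_space H d" using A1 by simp
  have Bp: "B > 0" using A2 by simp
  define C where "C = real CARD('c)"
  have C2': "C \<ge> 2" using C2 unfolding C_def by simp
  have Lle: "LDM D H g x0 \<le> rho D h g" if "h \<in> disagree_set H g x0" for h
    unfolding LDM_def by (rule cINF_lower[OF _ that]) (rule bdd_belowI2[where m=0], simp add: rho_def)
  have part1: "measure (Q \<Otimes>\<^sub>M PiM {..<M} (\<lambda>_. D))
      {z \<in> space (Q \<Otimes>\<^sub>M PiM {..<M} (\<lambda>_. D)).
         estimate_ok D H g x0 M ((\<lambda>i. hs i (fst z)) ` {..<N}) (snd z) (2 * \<delta> + \<alpha> N e + e)}
      \<ge> 1 - 1 / (C * real N) - \<beta> N"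
    if \<delta>: "\<delta> > 0" and N: "N \<ge> 1" and Mb: "real M > 8 / \<delta>^2 * ln (C * real N)"
      and e: "0 < e" "e < 1" for \<delta> N M e
  proof -
    let ?P = "PiM {..<M} (\<lambda>_. D)"
    let ?O = "Q \<Otimes>\<^sub>M ?P"
    let ?G = "{z \<in> space ?O. estimate_ok D H g x0 M ((\<lambda>i. hs i (fst z)) ` {..<N}) (snd z) (2 * \<delta> + \<alpha> N e + e)}"
    interpret P: prob_space ?P using D by (intro prob_space_PiM) auto
    interpret O: pair_prob_space Q ?P ..
    have CN: "C * real N \<ge> 2" using C2' N
      by (metis mult.right_neutral mult_mono of_nat_1 of_nat_le_iff order.trans zero_le_numeral le_numeral_extra(1) one_le_numeral)
    have lnpos: "ln (C * real N) > 0" using CN by simp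
    have K: "8 * ln (C * real N) < real M * \<delta>^2"
    proof -
      have "8 * ln (C * real N) = (8 / \<delta>^2 * ln (C * real N)) * \<delta>^2" using \<delta> by (simp add: field_simps)
      also have "\<dots> < real M * \<delta>^2" using Mb \<delta> by (intro mult_strict_right_mono) auto
      finally show ?thesis .
    qed
    have Mpos: "M \<ge> 1"
    proof -
      have "0 < 8 / \<delta>^2 * ln (C * real N)" using lnpos \<delta> by simp
      then show ?thesis using Mb by simp
    qed
    have Gs: "?G \<in> sets ?O" by (rule good_sets[OF D Q H_labels H_meas g x0 hs_in hs_meas])
    show ?thesis
    proof (cases "\<beta> N \<ge> 1")
      case True
      have "0 \<le> 1 / (C * real N)" using CN by simp
      then show ?thesis using True measure_nonneg[of ?O ?G] by linarith
    next
      case False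
      let ?Cov = "{\<omega> \<in> space Q. coverage_event D H d g x0 e ((\<lambda>i. hs i \<omega>) ` {..<N}) (\<alpha> N e / B)}"
      have covp: "measure Q ?Cov \<ge> 1 - \<beta> N" using A3 e N by auto
      have Covs: "?Cov \<in> sets Q"
      proof (rule ccontr)
        assume "?Cov \<notin> sets Q"
        then have "measure Q ?Cov = 0" by (rule measure_notin_sets)
        with covp False show False by simp
      qed
      define bad where "bad \<omega> i = {X \<in> space ?P. \<delta> \<le> \<bar>rho_emp M X (hs i \<omega>) g - rho D (hs i \<omega>) g\<bar>}" for \<omega> i
      have bad_both: "bad \<omega> i \<in> sets ?P \<and> measure ?P (bad \<omega> i) \<le> 2 * exp (- 2 * real M * \<delta>\<^sup>2)"
        if \<omega>: "\<omega> \<in> space Q" for \<omega> i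
      proof -
        define f where "f x = (of_bool (hs i \<omega> x \<noteq> g x) :: real)" for x
        have hH: "hs i \<omega> \<in> H" using hs_in \<omega> by auto
        have fp: "Measurable.pred D (\<lambda>x. hs i \<omega> x \<noteq> g x)"
          by (rule pred_neq_finite[OF _ _ finite_onehot]) (use H_meas H_labels hH g in auto)
        have fm: "f \<in> borel_measurable D" unfolding f_def using fp by measurable
        have int: "integral\<^sup>L D f = rho D (hs i \<omega>) g"
        proof -
          have "integral\<^sup>L D f = integral\<^sup>L D (indicator {x\<in>space D. hs i \<omega> x \<noteq> g x})"
            by (intro Bochner_Integration.integral_cong) (auto simp: f_def indicator_def)
          also have "\<dots> = rho D (hs i \<omega>) g" unfolding rho_def
            by (simp add: Int_absorb2)
          finally show ?thesis .
        qed
        have eqset: "bad \<omega> i = {X \<in> space ?P. \<delta> \<le> \<bar>(\<Sum>j<M. f (X j)) / real M - integral\<^sup>L D f\<bar>}"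
          unfolding bad_def int rho_emp_def f_def by simp
        have fj: "(\<lambda>X. f (X j)) \<in> borel_measurable ?P" if "j \<in> {..<M}" for j
          by (rule measurable_compose[OF measurable_component_singleton[OF that] fm])
        have sm: "(\<lambda>X. (\<Sum>j<M. f (X j)) / real M) \<in> borel_measurable ?P"
          by (intro borel_measurable_divide borel_measurable_sum) (use fj in auto)
        have "bad \<omega> i \<in> sets ?P" unfolding eqset using sm by measurable
        moreover have "measure ?P (bad \<omega> i) \<le> 2 * exp (- 2 * real M * \<delta>\<^sup>2)"
          unfolding eqset by (rule hoeff[OF D Mpos fm]) (use \<delta> in \<open>auto simp: f_def\<close>)
        ultimately show ?thesis by simp
      qed
      have badU: "measure ?P (\<Union>i<N. bad \<omega> i) \<le> 1 / (C * real N)" if \<omega>: "\<omega> \<in> space Q" for \<omega>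
      proof -
        have "measure ?P (\<Union>i<N. bad \<omega> i) \<le> (\<Sum>i<N. measure ?P (bad \<omega> i))"
          by (rule measure_UNION_le) (use bad_both \<omega> in auto)
        also have "\<dots> \<le> (\<Sum>i<N. 2 * exp (- 2 * real M * \<delta>\<^sup>2))"
          by (intro sum_mono) (use bad_both \<omega> in auto)
        also have "\<dots> = 2 * real N * exp (- 2 * (real M * \<delta>\<^sup>2))" by simp
        also have "\<dots> \<le> 1 / (C * real N)"
        proof (rule numeric[OF CN])
          show "1 \<le> real N" using N by simp
          have "1 * real N \<le> C * real N" by (rule mult_right_mono) (use C2' in auto)
          then show "real N \<le> C * real N" by simp
          show "8 * ln (C * real N) < real M * \<delta>\<^sup>2" by (rule K)
        qed
        finally show ?thesis .
      qed
      have incl: "space ?P - (\<Union>i<N. bad \<omega> i) \<subseteq> Pair \<omega> -` ?G" if cov\<omega>: "\<omega> \<in> ?Cov" for \<omega>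
      proof
        fix X assume X: "X \<in> space ?P - (\<Union>i<N. bad \<omega> i)"
        have \<omega>: "\<omega> \<in> space Q" using cov\<omega> by simp
        have close: "\<bar>rho_emp M X (hs i \<omega>) g - rho D (hs i \<omega>) g\<bar> < \<delta>" if "i < N" for i
          using X that unfolding bad_def by (auto simp: not_le)
        define T where "T = disagree_set ((\<lambda>i. hs i \<omega>) ` {..<N}) g x0"
        define S where "S = {hs \<in> disagree_set H g x0. rho D hs g - LDM D H g x0 \<le> e}"
        have cov: "S \<noteq> {} \<and> T \<noteq> {} \<and> (INF hs\<in>S. Min ((\<lambda>h. d hs h) ` T)) \<le> \<alpha> N e / B"
          using cov\<omega> unfolding coverage_event_def Let_def S_def T_def by simp
        have TH: "finite T" "T \<subseteq> H" unfolding T_def disagree_set_def using hs_in \<omega> by auto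
        obtain h where h: "h \<in> T" "rho D h g \<le> LDM D H g x0 + e + B * (\<alpha> N e / B)"
          using cov_key[OF D H_labels H_meas Met A2, where xz=x0 and e=e and T=T and a="\<alpha> N e / B"] TH cov g
          unfolding S_def by auto
        then obtain i where i: "i < N" "hs i \<omega> x0 \<noteq> g x0" "h = hs i \<omega>"
          unfolding T_def disagree_set_def by auto
        have aN: "\<alpha> N e \<ge> 0" using \<alpha>_nonneg e by auto
        have BB: "B * (\<alpha> N e / B) = \<alpha> N e" using Bp by simp
        have L: "LDM D H g x0 \<le> rho D (hs j \<omega>) g" if "j < N" "hs j \<omega> x0 \<noteq> g x0" for j
          using Lle[of "hs j \<omega>"] hs_in \<omega> that unfolding disagree_set_def by auto
        have "estimate_ok D H g x0 M ((\<lambda>i. hs i \<omega>) ` {..<N}) X (2 * \<delta> + \<alpha> N e + e)"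
          unfolding est_char
        proof
          have "rho_emp M X (hs i \<omega>) g \<le> LDM D H g x0 + (2 * \<delta> + \<alpha> N e + e)"
            using h(2)[unfolded i(3)] close[OF i(1)] BB \<delta> by linarith
          then show "\<exists>i<N. hs i \<omega> x0 \<noteq> g x0 \<and> rho_emp M X (hs i \<omega>) g \<le> LDM D H g x0 + (2 * \<delta> + \<alpha> N e + e)"
            using i by blast
          show "\<forall>i<N. hs i \<omega> x0 \<noteq> g x0 \<longrightarrow> LDM D H g x0 - (2 * \<delta> + \<alpha> N e + e) \<le> rho_emp M X (hs i \<omega>) g"
          proof (intro allI impI)
            fix j assume j: "j < N" "hs j \<omega> x0 \<noteq> g x0"
            show "LDM D H g x0 - (2 * \<delta> + \<alpha> N e + e) \<le> rho_emp M X (hs j \<omega>) g"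
              using close[OF j(1)] L[OF j] aN e \<delta> by linarith
          qed
        qed
        then show "X \<in> Pair \<omega> -` ?G" using \<omega> X by (simp add: space_pair_measure)
      qed
      have a0: "0 \<le> 1 - 1 / (C * real N)" using CN by simp
      have "ennreal ((1 - 1 / (C * real N)) * (1 - \<beta> N)) \<le> ennreal ((1 - 1 / (C * real N)) * measure Q ?Cov)"
        using covp a0 by (intro ennreal_leI mult_left_mono) auto
      also have "\<dots> = (\<integral>\<^sup>+\<omega>. ennreal (1 - 1 / (C * real N)) * indicator ?Cov \<omega> \<partial>Q)"
        using Covs a0 by (simp add: nn_integral_cmult_indicator Qp.emeasure_eq_measure ennreal_mult)
      also have "\<dots> \<le> (\<integral>\<^sup>+\<omega>. emeasure ?P (Pair \<omega> -` ?G) \<partial>Q)"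
      proof (intro nn_integral_mono)
        fix \<omega> assume \<omega>: "\<omega> \<in> space Q"
        show "ennreal (1 - 1 / (C * real N)) * indicator ?Cov \<omega> \<le> emeasure ?P (Pair \<omega> -` ?G)"
        proof (cases "\<omega> \<in> ?Cov")
          case True
          have Us: "(\<Union>i<N. bad \<omega> i) \<in> sets ?P" using bad_both \<omega> by auto
          have "1 - 1 / (C * real N) \<le> 1 - measure ?P (\<Union>i<N. bad \<omega> i)" using badU[OF \<omega>] by simp
          also have "\<dots> = measure ?P (space ?P - (\<Union>i<N. bad \<omega> i))" by (rule P.prob_compl[symmetric, OF Us])
          also have "\<dots> \<le> measure ?P (Pair \<omega> -` ?G)"
            by (rule P.finite_measure_mono[OF incl[OF True]]) (rule sets_Pair1[OF Gs])
          finally show ?thesis using True by (simp add: P.emeasure_eq_measure)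
        next
          case False
          then show ?thesis by simp
        qed
      qed
      also have "\<dots> = emeasure ?O ?G" by (rule P.emeasure_pair_measure_alt[symmetric, OF Gs])
      also have "\<dots> = ennreal (measure ?O ?G)" by (simp add: O.emeasure_eq_measure)
      finally have "(1 - 1 / (C * real N)) * (1 - \<beta> N) \<le> measure ?O ?G"
        by (subst (asm) ennreal_le_iff) (auto simp: measure_nonneg)
      moreover have "0 \<le> 1 / (C * real N) * \<beta> N" using CN \<beta>_pos by (simp add: less_imp_le)
      moreover have "(1 - 1 / (C * real N)) * (1 - \<beta> N) = 1 - 1 / (C * real N) - \<beta> N + 1 / (C * real N) * \<beta> N"
        by (simp only: left_diff_distrib right_diff_distrib)
      ultimately show ?thesis by linarith
    qed
  qed
  show ?thesis
  proof
    show "\<forall>\<delta>>0. \<forall>N\<ge>1. \<forall>M::nat. real M > 8 / \<delta>^2 * ln (real CARD('c) * real N) \<longrightarrow>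
        (\<forall>e. 0 < e \<and> e < 1 \<longrightarrow>
           prob_space.prob (Q \<Otimes>\<^sub>M PiM {..<M} (\<lambda>_. D))
             {z \<in> space (Q \<Otimes>\<^sub>M PiM {..<M} (\<lambda>_. D)).
                estimate_ok D H g x0 M ((\<lambda>i. hs i (fst z)) ` {..<N}) (snd z)
                  (2 * \<delta> + \<alpha> N e + e)}
           \<ge> 1 - 1 / (real CARD('c) * real N) - \<beta> N)"
      using part1 unfolding C_def by blast
    show "\<forall>Ns Ms :: nat \<Rightarrow> nat.
        filterlim Ns at_top sequentially \<longrightarrow> filterlim Ms at_top sequentially \<longrightarrow>
        filterlim (\<lambda>k. real (Ms k) / ln (real CARD('c) * real (Ns k))) at_top sequentially \<longrightarrow>
        (\<forall>\<eta>>0. (\<lambda>k. prob_space.prob (Q \<Otimes>\<^sub>M PiM {..<Ms k} (\<lambda>_. D))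
             {z \<in> space (Q \<Otimes>\<^sub>M PiM {..<Ms k} (\<lambda>_. D)).
                \<not> estimate_ok D H g x0 (Ms k) ((\<lambda>i. hs i (fst z)) ` {..<Ns k}) (snd z) \<eta>})
           \<longlonglongrightarrow> 0)"
    proof (intro allI impI)
      fix Ns Ms :: "nat \<Rightarrow> nat" and \<eta> :: real
      assume Ns: "filterlim Ns at_top sequentially" and Ms: "filterlim Ms at_top sequentially"
        and R: "filterlim (\<lambda>k. real (Ms k) / ln (real CARD('c) * real (Ns k))) at_top sequentially"
        and \<eta>: "\<eta> > 0"
      define e where "e = min (1/2) (\<eta> / 4)"
      define \<delta> where "\<delta> = \<eta> / 8"
      have e: "0 < e" "e < 1" "e \<le> \<eta> / 4" using \<eta> unfolding e_def by auto
      have \<delta>: "\<delta> > 0" using \<eta> unfolding \<delta>_def by simp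
      have E1: "\<forall>\<^sub>F k in sequentially. 1 \<le> Ns k" using Ns by (simp add: filterlim_at_top)
      have "(\<lambda>k. \<alpha> (Ns k) e) \<longlonglongrightarrow> 0"
        using filterlim_compose[OF \<alpha>_lim[rule_format, OF conjI[OF e(1) e(2)]] Ns] by simp
      then have E2: "\<forall>\<^sub>F k in sequentially. \<alpha> (Ns k) e < \<eta> / 4"
        using \<eta> by (intro order_tendstoD(2)) auto
      have E3: "\<forall>\<^sub>F k in sequentially. 8 / \<delta>^2 + 1 \<le> real (Ms k) / ln (C * real (Ns k))"
        using R unfolding C_def by (simp add: filterlim_at_top)
      define ub where "ub k = 1 / (C * real (Ns k)) + \<beta> (Ns k)" for k
      let ?bad = "\<lambda>k. measure (Q \<Otimes>\<^sub>M PiM {..<Ms k} (\<lambda>_. D))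
             {z \<in> space (Q \<Otimes>\<^sub>M PiM {..<Ms k} (\<lambda>_. D)).
                \<not> estimate_ok D H g x0 (Ms k) ((\<lambda>i. hs i (fst z)) ` {..<Ns k}) (snd z) \<eta>}"
      have ev: "\<forall>\<^sub>F k in sequentially. ?bad k \<le> ub k"
        using E1 E2 E3
      proof eventually_elim
        case (elim k)
        let ?P = "PiM {..<Ms k} (\<lambda>_. D)"
        let ?O = "Q \<Otimes>\<^sub>M ?P"
        interpret P: prob_space ?P using D by (intro prob_space_PiM) auto
        interpret O: pair_prob_space Q ?P ..
        have CN: "C * real (Ns k) \<ge> 2" using C2' elim(1)
          by (metis mult.right_neutral mult_mono of_nat_1 of_nat_le_iff order.trans zero_le_numeral le_numeral_extra(1) one_le_numeral)
        have lnpos: "ln (C * real (Ns k)) > 0" using CN by simp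
        have "8 / \<delta>^2 * ln (C * real (Ns k)) < (8 / \<delta>^2 + 1) * ln (C * real (Ns k))"
          using lnpos by (simp add: distrib_right)
        also have "\<dots> \<le> real (Ms k)" using elim(3) lnpos by (simp add: le_divide_eq)
        finally have Mb: "8 / \<delta>^2 * ln (C * real (Ns k)) < real (Ms k)" .
        let ?Gt = "{z \<in> space ?O. estimate_ok D H g x0 (Ms k) ((\<lambda>i. hs i (fst z)) ` {..<Ns k}) (snd z) (2 * \<delta> + \<alpha> (Ns k) e + e)}"
        let ?Ge = "{z \<in> space ?O. estimate_ok D H g x0 (Ms k) ((\<lambda>i. hs i (fst z)) ` {..<Ns k}) (snd z) \<eta>}"
        have p1: "measure ?O ?Gt \<ge> 1 - 1 / (C * real (Ns k)) - \<beta> (Ns k)"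
          by (rule part1[OF \<delta> elim(1) Mb e(1) e(2)])
        have tle: "2 * \<delta> + \<alpha> (Ns k) e + e \<le> \<eta>" using elim(2) e unfolding \<delta>_def by linarith
        have sub: "?Gt \<subseteq> ?Ge" using tle unfolding estimate_ok_def by auto
        have Ges: "?Ge \<in> sets ?O" by (rule good_sets[OF D Q H_labels H_meas g x0 hs_in hs_meas])
        have "?bad k = measure ?O (space ?O - ?Ge)" by (intro arg_cong[where f="measure ?O"]) auto
        also have "\<dots> = 1 - measure ?O ?Ge" by (rule O.prob_compl[OF Ges])
        also have "\<dots> \<le> 1 - measure ?O ?Gt" using O.finite_measure_mono[OF sub Ges] by simp
        also have "\<dots> \<le> ub k" using p1 unfolding ub_def by simp
        finally show ?case .
      qed
      have "(\<lambda>k. inverse (real (Ns k))) \<longlonglongrightarrow> 0"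
        by (rule tendsto_inverse_0_at_top[OF filterlim_compose[OF filterlim_real_sequentially Ns]])
      then have "(\<lambda>k. (1 / C) * inverse (real (Ns k))) \<longlonglongrightarrow> (1 / C) * 0"
        by (intro tendsto_mult tendsto_const)
      moreover have "(\<lambda>k. \<beta> (Ns k)) \<longlonglongrightarrow> 0" using filterlim_compose[OF \<beta>_lim Ns] by simp
      ultimately have "(\<lambda>k. (1 / C) * inverse (real (Ns k)) + \<beta> (Ns k)) \<longlonglongrightarrow> 0 + 0"
        by (intro tendsto_add) auto
      then have ublim: "ub \<longlonglongrightarrow> 0" unfolding ub_def by (simp add: field_simps)
      show "?bad \<longlonglongrightarrow> 0"
        by (rule tendsto_sandwich[OF _ ev tendsto_const ublim]) (simp add: measure_nonneg)
    qed
  qed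
qed

end
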